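(* Let $H$ be a complex Hilbert space and $\{\mathcal{U}(t)\}_{t\geq 0}$ a strongly continuous semigroup on $H$ with generator $\mathcal{L}$. Let $z\in D(\mathcal{L})\cap D(\mathcal{L}^\dagger)$ with $z\neq 0$, let $\mathcal{P}:=(\cdot,z)(z,z)^{-1}z$ and $\mathcal{Q}:=1-\mathcal{P}$, and let $\{\mathcal{G}(t)\}_{t\geq0}$ denote the strongly continuous semigroup generated by $\overline{\mathcal{QL}}\mathcal{Q}$. Then the orbit map $\mathbb{R}_+\ni t\mapsto\mathcal{U}(t)z\in D(\mathcal{L})$ solves $$\frac{d}{dt}\mathcal{U}(t)z=\mathcal{U}(t)\mathcal{PL}z+\mathcal{G}(t)\mathcal{QL}z+\int_0^t K(t-s)\,\mathcal{U}(s)z\,ds,\qquad t\ge0,$$ where $K(t):=(\mathcal{G}(t)\mathcal{QL}z,\mathcal{Q}\mathcal{L}^\dagger z)(z,z)^{-1}$.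
   Context: The scalar product $(\cdot,\cdot)$ on $H$ is conjugate-linear in its second argument. The generator is $\mathcal{L}x:=\lim_{h\searrow 0}\frac1h[\mathcal{U}(h)x-x]$ on the set $D(\mathcal{L})$ where the limit exists. $\dagger$ denotes the adjoint, the overbar the closure of a closable operator; $D(\overline{\mathcal{QL}}\mathcal{Q})=\{x:\mathcal{Q}x\in D(\overline{\mathcal{QL}})\}$. The integral is a Bochner integral. *)

theory Defs
  imports "HOL-Analysis.Analysis"
begin

class complex_inner = real_normed_vector +
  fixes scaleC :: "complex \<Rightarrow> 'a \<Rightarrow> 'a"
    and cinner :: "'a \<Rightarrow> 'a \<Rightarrow> complex"
  assumes scaleC_add_right: "scaleC a (x + y) = scaleC a x + scaleC a y"
    and scaleC_add_left: "scaleC (a + b) x = scaleC a x + scaleC b x"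
    and scaleC_scaleC: "scaleC a (scaleC b x) = scaleC (a * b) x"
    and scaleC_one: "scaleC 1 x = x"
    and scaleR_scaleC: "scaleR r x = scaleC (complex_of_real r) x"
    and cinner_commute: "cinner x y = cnj (cinner y x)"
    and cinner_add_left: "cinner (x + y) w = cinner x w + cinner y w"
    and cinner_scaleC_left: "cinner (scaleC c x) y = c * cinner x y"
    and cinner_self_real: "Im (cinner x x) = 0"
    and cinner_self_nonneg: "0 \<le> Re (cinner x x)"
    and cinner_self_eq_zero: "cinner x x = 0 \<longleftrightarrow> x = 0"
    and norm_eq_sqrt_cinner: "norm x = sqrt (Re (cinner x x))"

text \<open>A complex Hilbert space is a complete complex inner product space:
type class constraint \<open>{complex_inner, complete_space}\<close>.\<close>

definition bounded_clinear :: "('a::complex_inner \<Rightarrow> 'b::complex_inner) \<Rightarrow> bool" where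
  "bounded_clinear f \<longleftrightarrow> bounded_linear f \<and> (\<forall>c x. f (scaleC c x) = scaleC c (f x))"

definition c0_semigroup :: "(real \<Rightarrow> 'a::complex_inner \<Rightarrow> 'a) \<Rightarrow> bool" where
  "c0_semigroup U \<longleftrightarrow>
     (\<forall>t\<ge>0. bounded_clinear (U t)) \<and>
     U 0 = id \<and>
     (\<forall>s\<ge>0. \<forall>t\<ge>0. U (s + t) = U s \<circ> U t) \<and>
     (\<forall>x. continuous_on {0..} (\<lambda>t. U t x))"

definition gen_dom :: "(real \<Rightarrow> 'a::complex_inner \<Rightarrow> 'a) \<Rightarrow> 'a set" where
  "gen_dom U = {x. \<exists>y. ((\<lambda>h. (1 / h) *\<^sub>R (U h x - x)) \<longlongrightarrow> y) (at_right 0)}"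

text \<open>The generator (meaningful on \<open>gen_dom U\<close>).\<close>
definition gen :: "(real \<Rightarrow> 'a::complex_inner \<Rightarrow> 'a) \<Rightarrow> 'a \<Rightarrow> 'a" where
  "gen U x = Lim (at_right 0) (\<lambda>h. (1 / h) *\<^sub>R (U h x - x))"

definition adj_dom :: "'a set \<Rightarrow> ('a::complex_inner \<Rightarrow> 'a) \<Rightarrow> 'a set" where
  "adj_dom D A = {y. \<exists>w. \<forall>x\<in>D. cinner (A x) y = cinner x w}"

definition adj :: "'a set \<Rightarrow> ('a::complex_inner \<Rightarrow> 'a) \<Rightarrow> 'a \<Rightarrow> 'a" where
  "adj D A y = (THE w. \<forall>x\<in>D. cinner (A x) y = cinner x w)"

definition graph :: "'a set \<Rightarrow> ('a \<Rightarrow> 'b) \<Rightarrow> ('a \<times> 'b) set" where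
  "graph D A = {(x, A x) | x. x \<in> D}"

definition clos_dom :: "'a set \<Rightarrow> ('a::complex_inner \<Rightarrow> 'a) \<Rightarrow> 'a set" where
  "clos_dom D A = {x. \<exists>y. (x, y) \<in> closure (graph D A)}"

definition clos :: "'a set \<Rightarrow> ('a::complex_inner \<Rightarrow> 'a) \<Rightarrow> 'a \<Rightarrow> 'a" where
  "clos D A x = (THE y. (x, y) \<in> closure (graph D A))"

definition projP :: "'a::complex_inner \<Rightarrow> 'a \<Rightarrow> 'a" where
  "projP z x = scaleC (cinner x z / cinner z z) z"

definition projQ :: "'a::complex_inner \<Rightarrow> 'a \<Rightarrow> 'a" where
  "projQ z x = x - projP z x"

end

theory Submission
  imports Defs
begin


lemma cinner_zero_left[simp]: "cinner 0 y = 0"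
  using cinner_add_left[of 0 0 y] by simp
lemma cinner_zero_right[simp]: "cinner x 0 = 0"
  using cinner_commute[of x 0] by simp
lemma cinner_minus_left: "cinner (- x) y = - cinner x y"
  using cinner_add_left[of x "-x" y] by (simp add: minus_unique)
lemma cinner_diff_left: "cinner (x - y) w = cinner x w - cinner y w"
  using cinner_add_left[of x "-y" w] cinner_minus_left[of y w] by simp
lemma cinner_add_right: "cinner x (y + w) = cinner x y + cinner x w"
  by (metis cinner_commute cinner_add_left complex_cnj_add)
lemma cinner_minus_right: "cinner x (- y) = - cinner x y"
  by (metis cinner_commute cinner_minus_left complex_cnj_minus)
lemma cinner_diff_right: "cinner x (y - w) = cinner x y - cinner x w"
  by (metis cinner_commute cinner_diff_left complex_cnj_diff)
lemma cinner_scaleC_right: "cinner x (scaleC c y) = cnj c * cinner x y"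
  by (metis cinner_commute cinner_scaleC_left complex_cnj_mult)
lemma cinner_scaleR_left: "cinner (r *\<^sub>R x) y = of_real r * cinner x y"
  by (simp add: scaleR_scaleC cinner_scaleC_left)
lemma cinner_scaleR_right: "cinner x (r *\<^sub>R y) = of_real r * cinner x y"
  by (simp add: scaleR_scaleC cinner_scaleC_right)
lemma cinner_self_eq: "cinner x x = complex_of_real ((norm x)^2)"
proof -
  have "(norm x)^2 = Re (cinner x x)" using norm_eq_sqrt_cinner[of x] cinner_self_nonneg[of x] by simp
  then show ?thesis using cinner_self_real[of x] by (simp add: complex_eq_iff)
qed

lemma scaleC_zero_right[simp]: "scaleC c 0 = 0"
  using scaleC_add_right[of c 0 0] by simp
lemma scaleC_zero_left[simp]: "scaleC 0 x = 0"
  using scaleC_add_left[of 0 0 x] by simp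
lemma scaleC_minus_right: "scaleC c (- x) = - scaleC c x"
  using scaleC_add_right[of c x "-x"] by (simp add: minus_unique)
lemma scaleC_diff_right: "scaleC c (x - y) = scaleC c x - scaleC c y"
  using scaleC_add_right[of c x "-y"] scaleC_minus_right[of c y] by simp
lemma scaleC_minus_left: "scaleC (- c) x = - scaleC c x"
  using scaleC_add_left[of c "-c" x] by (simp add: minus_unique)
lemma scaleC_diff_left: "scaleC (a - b) x = scaleC a x - scaleC b x"
  using scaleC_add_left[of a "-b" x] scaleC_minus_left[of b x] by simp
lemma scaleC_scaleR_comm: "scaleC c (r *\<^sub>R x) = r *\<^sub>R scaleC c x"
  by (simp add: scaleR_scaleC scaleC_scaleC mult.commute)
lemma scaleC_of_real: "scaleC (complex_of_real r) x = r *\<^sub>R x"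
  by (simp add: scaleR_scaleC)

lemma norm_scaleC: "norm (scaleC c x) = cmod c * norm x"
proof -
  have "(norm (scaleC c x))^2 = (cmod c * norm x)^2"
  proof -
    have "complex_of_real ((norm (scaleC c x))^2) = cinner (scaleC c x) (scaleC c x)"
      by (simp add: cinner_self_eq)
    also have "\<dots> = c * cnj c * cinner x x" by (simp add: cinner_scaleC_left cinner_scaleC_right)
    also have "\<dots> = complex_of_real ((cmod c * norm x)^2)"
      by (simp only: complex_norm_square[symmetric] cinner_self_eq of_real_mult[symmetric] power_mult_distrib)
    finally show ?thesis using of_real_eq_iff by blast
  qed
  then show ?thesis by (simp add: power2_eq_iff_nonneg)
qed

lemma cauchy_schwarz_c: "cmod (cinner x y) \<le> norm x * norm y"
proof (cases "y = 0")
  case True then show ?thesis by simp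
next
  case False
  define a where "a = cinner x y"
  define b where "b = (norm y)^2"
  have b0: "b > 0" using False by (simp add: b_def)
  have yy: "cinner y y = complex_of_real b" by (simp add: b_def cinner_self_eq)
  have yx: "cinner y x = cnj a" by (simp add: a_def cinner_commute[of y x])
  define k where "k = a / complex_of_real b"
  have "cinner (x - scaleC k y) (x - scaleC k y)
      = cinner x x - cnj k * a - k * cnj a + k * cnj k * complex_of_real b"
    by (simp add: cinner_diff_left cinner_diff_right cinner_scaleC_left cinner_scaleC_right yy yx a_def algebra_simps)
  also have "\<dots> = cinner x x - complex_of_real ((cmod a)^2 / b)"
  proof -
    have bnz: "complex_of_real b \<noteq> 0" using b0 by simp
    have ck: "cnj k = cnj a / complex_of_real b" by (simp add: k_def)
    have A: "a * cnj a = complex_of_real ((cmod a)^2)" by (simp only: complex_norm_square)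
    have 1: "cnj k * a = complex_of_real ((cmod a)^2 / b)" using A by (simp add: ck mult.commute)
    have 2: "k * cnj a = complex_of_real ((cmod a)^2 / b)" using A by (simp add: k_def)
    have 3: "k * cnj k * complex_of_real b = complex_of_real ((cmod a)^2 / b)"
      using A bnz by (simp add: k_def ck)
    show ?thesis by (simp only: 1 2 3) simp
  qed
  finally have "0 \<le> Re (cinner x x) - (cmod a)^2 / b"
    by (metis cinner_self_nonneg minus_complex.simps(1) Re_complex_of_real)
  then have "(cmod a)^2 \<le> (norm x)^2 * b"
    using b0 by (simp add: cinner_self_eq field_simps)
  then have "(cmod a)^2 \<le> (norm x * norm y)^2" by (simp add: b_def power_mult_distrib)
  then show ?thesis by (simp add: a_def abs_le_square_iff[symmetric])
qed

lemma bounded_bilinear_cinner: "bounded_bilinear cinner"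
proof
  show "cinner (a + a') b = cinner a b + cinner a' b" for a a' b by (rule cinner_add_left)
  show "cinner a (b + b') = cinner a b + cinner a b'" for a b b' by (rule cinner_add_right)
  show "cinner (r *\<^sub>R a) b = r *\<^sub>R cinner a b" for r a b by (simp add: cinner_scaleR_left scaleR_conv_of_real)
  show "cinner a (r *\<^sub>R b) = r *\<^sub>R cinner a b" for r a b by (simp add: cinner_scaleR_right scaleR_conv_of_real)
  show "\<exists>K. \<forall>a b. norm (cinner a b) \<le> norm a * norm b * K"
    by (rule exI[of _ 1]) (simp add: cauchy_schwarz_c)
qed

lemma bounded_bilinear_scaleC: "bounded_bilinear scaleC"
proof
  show "scaleC (a + a') b = scaleC a b + scaleC a' b" for a a' b by (rule scaleC_add_left)
  show "scaleC a (b + b') = scaleC a b + scaleC a b'" for a b b' by (rule scaleC_add_right)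
  show "scaleC (r *\<^sub>R a) b = r *\<^sub>R scaleC a b" for r a b
    by (simp add: scaleR_scaleC scaleC_scaleC scaleR_conv_of_real)
  show "scaleC a (r *\<^sub>R b) = r *\<^sub>R scaleC a b" for r a b by (rule scaleC_scaleR_comm)
  show "\<exists>K. \<forall>a b. norm (scaleC a b) \<le> norm a * norm b * K"
    by (rule exI[of _ 1]) (simp add: norm_scaleC)
qed




typedef (overloaded) ('a::real_normed_vector) wr = "UNIV :: 'a set" by auto

setup_lifting type_definition_wr

instantiation wr :: (real_normed_vector) real_normed_vector
begin
lift_definition zero_wr :: "'a wr" is 0 .
lift_definition plus_wr :: "'a wr \<Rightarrow> 'a wr \<Rightarrow> 'a wr" is "(+)" .
lift_definition minus_wr :: "'a wr \<Rightarrow> 'a wr \<Rightarrow> 'a wr" is "(-)" .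
lift_definition uminus_wr :: "'a wr \<Rightarrow> 'a wr" is uminus .
lift_definition scaleR_wr :: "real \<Rightarrow> 'a wr \<Rightarrow> 'a wr" is scaleR .
lift_definition norm_wr :: "'a wr \<Rightarrow> real" is norm .
lift_definition sgn_wr :: "'a wr \<Rightarrow> 'a wr" is sgn .
lift_definition dist_wr :: "'a wr \<Rightarrow> 'a wr \<Rightarrow> real" is dist .
definition uniformity_wr :: "('a wr \<times> 'a wr) filter" where
  "uniformity_wr = (INF e\<in>{0<..}. principal {(x, y). dist x y < e})"
definition open_wr :: "'a wr set \<Rightarrow> bool" where
  "open_wr U = (\<forall>x\<in>U. \<forall>\<^sub>F (x', y) in uniformity. x' = x \<longrightarrow> y \<in> U)"
instance
proof
  fix a b c :: "'a wr" and r s :: real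
  show "a + b + c = a + (b + c)" by transfer (simp add: algebra_simps)
  show "a + b = b + a" by transfer (simp add: algebra_simps)
  show "0 + a = a" by transfer simp
  show "- a + a = 0" by transfer simp
  show "a - b = a + - b" by transfer simp
  show "r *\<^sub>R (a + b) = r *\<^sub>R a + r *\<^sub>R b" by transfer (simp add: scaleR_add_right)
  show "(r + s) *\<^sub>R a = r *\<^sub>R a + s *\<^sub>R a" by transfer (simp add: scaleR_add_left)
  show "r *\<^sub>R s *\<^sub>R a = (r * s) *\<^sub>R a" by transfer simp
  show "1 *\<^sub>R a = a" by transfer simp
  show "dist a b = norm (a - b)" by transfer (simp add: dist_norm)
  show "sgn a = inverse (norm a) *\<^sub>R a" by transfer (simp add: sgn_div_norm)
  show "(uniformity :: ('a wr \<times> 'a wr) filter) = (INF e\<in>{0<..}. principal {(x, y). dist x y < e})"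
    by (simp add: uniformity_wr_def)
  show "open U = (\<forall>x\<in>U. \<forall>\<^sub>F (x', y) in uniformity. x' = x \<longrightarrow> y \<in> U)" for U :: "'a wr set"
    by (simp add: open_wr_def)
  show "(norm a = 0) = (a = 0)" by transfer simp
  show "norm (a + b) \<le> norm a + norm b" by transfer (rule norm_triangle_ineq)
  show "norm (r *\<^sub>R a) = \<bar>r\<bar> * norm a" by transfer simp
qed
end

instance wr :: ("{real_normed_vector, complete_space}") complete_space
proof
  fix X :: "nat \<Rightarrow> 'a wr"
  assume "Cauchy X"
  then have "Cauchy (\<lambda>n. Rep_wr (X n))"
    unfolding Cauchy_def by transfer
  then obtain L where "(\<lambda>n. Rep_wr (X n)) \<longlonglongrightarrow> L" using Cauchy_convergent_iff convergent_def by blast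
  then have "X \<longlonglongrightarrow> Abs_wr L"
    unfolding tendsto_iff by transfer
  then show "convergent X" by (auto simp: convergent_def)
qed

instance wr :: ("{real_normed_vector, complete_space}") banach ..

lemma bl_Rep_wr: "bounded_linear Rep_wr"
  by (rule bounded_linear_intro[where K=1]; transfer; simp)
lemma bl_Abs_wr: "bounded_linear Abs_wr"
  by (rule bounded_linear_intro[where K=1]; transfer; simp)

lemma integrable_cont:
  fixes f :: "real \<Rightarrow> 'a::{real_normed_vector, complete_space}"
  assumes "continuous_on {a..b} f"
  shows "f integrable_on {a..b}"
proof -
  have "continuous_on {a..b} (\<lambda>x. Abs_wr (f x))"
    by (rule bounded_linear.continuous_on[OF bl_Abs_wr assms])
  then have "(\<lambda>x. Abs_wr (f x)) integrable_on {a..b}" by (rule integrable_continuous_interval)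
  then obtain j where "((\<lambda>x. Abs_wr (f x)) has_integral j) {a..b}" by blast
  from has_integral_linear[OF this bl_Rep_wr] have "(f has_integral Rep_wr j) {a..b}"
    by (simp add: o_def Abs_wr_inverse)
  then show ?thesis by blast
qed

lemma integral_wr:
  fixes f :: "real \<Rightarrow> 'a::{real_normed_vector, complete_space}"
  assumes "f integrable_on S"
  shows "integral S f = Rep_wr (integral S (\<lambda>x. Abs_wr (f x)))"
proof -
  have "((\<lambda>x. Abs_wr (f x)) has_integral Abs_wr (integral S f)) S"
    using has_integral_linear[OF integrable_integral[OF assms] bl_Abs_wr] by (simp add: o_def)
  then show ?thesis by (simp add: integral_unique Abs_wr_inverse)
qed

lemma integral_has_vd:
  fixes f :: "real \<Rightarrow> 'a::{real_normed_vector, complete_space}"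
  assumes "continuous_on {a..b} f" "x \<in> {a..b}"
  shows "((\<lambda>u. integral {a..u} f) has_vector_derivative f x) (at x within {a..b})"
proof -
  have c: "continuous_on {a..b} (\<lambda>x. Abs_wr (f x))"
    by (rule bounded_linear.continuous_on[OF bl_Abs_wr assms(1)])
  have d: "((\<lambda>u. Rep_wr (integral {a..u} (\<lambda>x. Abs_wr (f x)))) has_vector_derivative Rep_wr (Abs_wr (f x))) (at x within {a..b})"
    by (rule bounded_linear.has_vector_derivative[OF bl_Rep_wr integral_has_vector_derivative[OF c assms(2)]])
  have e: "integral {a..u} f = Rep_wr (integral {a..u} (\<lambda>x. Abs_wr (f x)))" if "u \<in> {a..b}" for u
    by (rule integral_wr, rule integrable_cont, rule continuous_on_subset[OF assms(1)]) (use that in auto)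
  show ?thesis
    by (rule has_vector_derivative_transform[OF assms(2) e]) (use d in \<open>simp_all add: Abs_wr_inverse\<close>)
qed

lemma has_integral_combine':
  fixes f :: "real \<Rightarrow> 'a::{real_normed_vector, complete_space}"
  assumes "a \<le> c" "c \<le> b" "(f has_integral i) {a..c}" "(f has_integral j) {c..b}"
  shows "(f has_integral (i + j)) {a..b}"
proof -
  have "((\<lambda>x. Abs_wr (f x)) has_integral Abs_wr i + Abs_wr j) {a..b}"
    using has_integral_combine[OF assms(1,2) has_integral_linear[OF assms(3) bl_Abs_wr] has_integral_linear[OF assms(4) bl_Abs_wr]]
    by (simp add: o_def)
  from has_integral_linear[OF this bl_Rep_wr] show ?thesis
    by (simp add: o_def Abs_wr_inverse linear_simps(1)[OF bl_Rep_wr] Abs_wr_inverse)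
qed




lemma ubp:
  fixes T :: "'i \<Rightarrow> 'a::{real_normed_vector, complete_space} \<Rightarrow> 'b::real_normed_vector"
  assumes bl: "\<And>i. i \<in> I \<Longrightarrow> bounded_linear (T i)"
    and pw: "\<And>x. \<exists>B. \<forall>i\<in>I. norm (T i x) \<le> B"
  shows "\<exists>M. \<forall>i\<in>I. \<forall>x. norm (T i x) \<le> M * norm x"
proof -
  define E where "E n = {x. \<forall>i\<in>I. norm (T i x) \<le> real n}" for n :: nat
  have clE: "closed (E n)" for n
  proof -
    have "E n = (\<Inter>i\<in>I. {x. norm (T i x) \<le> real n})" by (auto simp: E_def)
    moreover have "closed {x. norm (T i x) \<le> real n}" if "i \<in> I" for i
      by (intro closed_Collect_le continuous_on_norm linear_continuous_on bl that continuous_on_const)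
    ultimately show ?thesis by auto
  qed
  have UE: "\<Union>(range E) = UNIV"
  proof -
    have "x \<in> \<Union>(range E)" for x
    proof -
      obtain B where B: "\<forall>i\<in>I. norm (T i x) \<le> B" using pw by blast
      have "x \<in> E (nat \<lceil>B\<rceil>)" unfolding E_def using B
        by (auto intro: order_trans[OF _ real_nat_ceiling_ge])
      then show ?thesis by blast
    qed
    then show ?thesis by auto
  qed
  have "\<exists>n. interior (E n) \<noteq> {}"
  proof (rule ccontr)
    assume "\<not> ?thesis"
    then have "euclidean interior_of \<Union>(range E) = {}"
      by (intro Baire_category_alt) (auto simp: completely_metrizable_space_euclidean clE)
    then show False using UE by simp
  qed
  then obtain n x0 where "x0 \<in> interior (E n)" by blast
  then obtain r where r: "r > 0" "ball x0 r \<subseteq> E n" by (auto simp: mem_interior)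
  have bnd: "norm (T i y) \<le> 2 * real n" if "i \<in> I" "norm y < r" for i y
  proof -
    have "x0 + y \<in> E n" "x0 \<in> E n" using r that by (auto simp: dist_norm)
    then have "norm (T i (x0 + y)) \<le> real n" "norm (T i x0) \<le> real n" using that by (auto simp: E_def)
    moreover have "T i y = T i (x0 + y) - T i x0" using bl[OF that(1)] by (simp add: linear_simps)
    ultimately show ?thesis by (metis norm_triangle_ineq4 order_trans add_mono mult_2)
  qed
  show ?thesis
  proof (intro exI ballI allI)
    fix i x assume i: "i \<in> I"
    show "norm (T i x) \<le> (4 * real n / r) * norm x"
    proof (cases "x = 0")
      case True then show ?thesis using bl[OF i] by (simp add: linear_simps)
    next
      case False
      define y where "y = (r / (2 * norm x)) *\<^sub>R x"
      have ny: "norm y < r" using False r by (simp add: y_def)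
      have "T i x = ((2 * norm x) / r) *\<^sub>R T i y"
        using False r bl[OF i] by (simp add: y_def linear_simps)
      then have "norm (T i x) = ((2 * norm x) / r) * norm (T i y)" using r by simp
      also have "\<dots> \<le> ((2 * norm x) / r) * (2 * real n)"
        using bnd[OF i ny] r by (intro mult_left_mono) auto
      also have "\<dots> = (4 * real n / r) * norm x" by (simp add: field_simps)
      finally show ?thesis .
    qed
  qed
qed

section \<open>Basic semigroup facts\<close>

context
  fixes U :: "real \<Rightarrow> 'a::{complex_inner, complete_space} \<Rightarrow> 'a"
  assumes U: "c0_semigroup U"
begin

lemma sg_bl: "t \<ge> 0 \<Longrightarrow> bounded_linear (U t)"
  using U by (auto simp: c0_semigroup_def bounded_clinear_def)
lemma sg_C: "t \<ge> 0 \<Longrightarrow> U t (scaleC c x) = scaleC c (U t x)"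
  using U by (auto simp: c0_semigroup_def bounded_clinear_def)
lemma sg_0[simp]: "U 0 x = x"
  using U by (auto simp: c0_semigroup_def)
lemma sg_add: "s \<ge> 0 \<Longrightarrow> t \<ge> 0 \<Longrightarrow> U (s + t) x = U s (U t x)"
  using U by (auto simp: c0_semigroup_def)
lemma sg_cont: "continuous_on {0..} (\<lambda>t. U t x)"
  using U by (auto simp: c0_semigroup_def)

lemma sg_lin:
  assumes "t \<ge> 0"
  shows "U t (x + y) = U t x + U t y" "U t (x - y) = U t x - U t y" "U t (r *\<^sub>R x) = r *\<^sub>R U t x"
    "U t 0 = 0" "U t (- x) = - U t x"
  using sg_bl[OF assms] by (simp_all add: linear_simps)

lemma sg_bound: "\<exists>M. \<forall>s\<in>{0..T}. \<forall>x. norm (U s x) \<le> M * norm x"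
proof (rule ubp)
  show "bounded_linear (U s)" if "s \<in> {0..T}" for s using sg_bl that by auto
  fix x
  have "compact ((\<lambda>t. U t x) ` {0..T})"
    by (rule compact_continuous_image[OF continuous_on_subset[OF sg_cont]]) auto
  then obtain B where "\<forall>y\<in>(\<lambda>t. U t x) ` {0..T}. norm y \<le> B"
    using compact_imp_bounded bounded_iff by metis
  then show "\<exists>B. \<forall>s\<in>{0..T}. norm (U s x) \<le> B" by auto
qed

lemma sg_tendsto:
  assumes f: "(f \<longlongrightarrow> x) F" and r: "(r \<longlongrightarrow> r0) F" and ev: "eventually (\<lambda>i. r i \<in> {0..T}) F"
    and r0: "r0 \<ge> 0"
  shows "((\<lambda>i. U (r i) (f i)) \<longlongrightarrow> U r0 x) F"
proof -
  obtain M where M: "\<And>s y. s \<in> {0..T} \<Longrightarrow> norm (U s y) \<le> M * norm y" using sg_bound[of T] by blast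
  have 1: "((\<lambda>i. U (r i) x) \<longlongrightarrow> U r0 x) F"
    by (rule continuous_on_tendsto_compose[OF sg_cont r]) (use r0 ev in \<open>auto elim: eventually_mono\<close>)
  have "((\<lambda>i. f i - x) \<longlongrightarrow> 0) F" using f by (simp add: LIM_zero_iff)
  then have "((\<lambda>i. M * norm (f i - x)) \<longlongrightarrow> 0) F"
    using tendsto_mult_right_zero tendsto_norm_zero by blast
  then have 2: "((\<lambda>i. U (r i) (f i - x)) \<longlongrightarrow> 0) F"
    by (rule Lim_null_comparison[rotated]) (use ev M in \<open>auto elim: eventually_mono\<close>)
  have "((\<lambda>i. U (r i) (f i - x) + U (r i) x) \<longlongrightarrow> 0 + U r0 x) F"
    by (rule tendsto_add[OF 2 1])
  moreover have "eventually (\<lambda>i. U (r i) (f i - x) + U (r i) x = U (r i) (f i)) F"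
    using ev by (rule eventually_mono) (auto simp: sg_lin)
  ultimately show ?thesis by (simp add: tendsto_cong)
qed

lemma gen_tendsto:
  assumes "x \<in> gen_dom U"
  shows "((\<lambda>h. (1 / h) *\<^sub>R (U h x - x)) \<longlongrightarrow> gen U x) (at_right 0)"
proof -
  obtain y where y: "((\<lambda>h. (1 / h) *\<^sub>R (U h x - x)) \<longlongrightarrow> y) (at_right 0)"
    using assms by (auto simp: gen_dom_def)
  then have "gen U x = y" unfolding gen_def by (intro tendsto_Lim) auto
  then show ?thesis using y by simp
qed

lemma gen_domI:
  assumes "((\<lambda>h. (1 / h) *\<^sub>R (U h x - x)) \<longlongrightarrow> y) (at_right 0)"
  shows "x \<in> gen_dom U" "gen U x = y"
  using assms unfolding gen_dom_def gen_def by (auto intro: tendsto_Lim)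

lemma gen_inv:
  assumes x: "x \<in> gen_dom U" and t: "t \<ge> 0"
  shows "U t x \<in> gen_dom U" "gen U (U t x) = U t (gen U x)"
proof -
  have "((\<lambda>h. U t ((1 / h) *\<^sub>R (U h x - x))) \<longlongrightarrow> U t (gen U x)) (at_right 0)"
    by (rule bounded_linear.tendsto[OF sg_bl[OF t] gen_tendsto[OF x]])
  moreover have "eventually (\<lambda>h. U t ((1 / h) *\<^sub>R (U h x - x)) = (1 / h) *\<^sub>R (U h (U t x) - U t x)) (at_right 0)"
    using eventually_at_right_less[of "0::real"]
  proof (rule eventually_mono)
    fix h :: real assume h: "0 < h"
    have "U h (U t x) = U t (U h x)" using sg_add[of h t x] sg_add[of t h x] h t by (simp add: add.commute)
    then show "U t ((1 / h) *\<^sub>R (U h x - x)) = (1 / h) *\<^sub>R (U h (U t x) - U t x)"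
      using t by (simp add: sg_lin)
  qed
  ultimately have "((\<lambda>h. (1 / h) *\<^sub>R (U h (U t x) - U t x)) \<longlongrightarrow> U t (gen U x)) (at_right 0)"
    by (simp add: tendsto_cong)
  then show "U t x \<in> gen_dom U" "gen U (U t x) = U t (gen U x)" by (rule gen_domI)+
qed

end

lemma vd_iff:
  fixes f :: "real \<Rightarrow> 'b::real_normed_vector"
  shows "(f has_vector_derivative D) (at x within S) \<longleftrightarrow>
    ((\<lambda>y. (1 / (y - x)) *\<^sub>R (f y - f x)) \<longlongrightarrow> D) (at x within S)"
proof -
  have eq: "eventually (\<lambda>y. norm (((f y - f x) - (y - x) *\<^sub>R D) /\<^sub>R norm (y - x)) =
       norm ((1 / (y - x)) *\<^sub>R (f y - f x) - D)) (at x within S)"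
    unfolding eventually_at_filter
  proof (intro always_eventually allI impI)
    fix y assume yx: "y \<noteq> x"
    define d where "d = y - x"
    have d0: "d \<noteq> 0" using yx by (simp add: d_def)
    have coef: "(d / \<bar>d\<bar>) * (1 / d) = 1 / \<bar>d\<bar>" using d0 by simp
    have "((f y - f x) - (y - x) *\<^sub>R D) /\<^sub>R norm (y - x) = (1 / \<bar>d\<bar>) *\<^sub>R (f y - f x) - (d / \<bar>d\<bar>) *\<^sub>R D"
      by (simp add: d_def scaleR_diff_right divide_inverse mult.commute)
    also have "\<dots> = (d / \<bar>d\<bar>) *\<^sub>R ((1 / d) *\<^sub>R (f y - f x) - D)"
      by (simp only: scaleR_diff_right scaleR_scaleR coef)
    finally have "norm (((f y - f x) - (y - x) *\<^sub>R D) /\<^sub>R norm (y - x)) = \<bar>d / \<bar>d\<bar>\<bar> * norm ((1 / d) *\<^sub>R (f y - f x) - D)"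
      by simp
    also have "\<bar>d / \<bar>d\<bar>\<bar> = 1" using d0 by simp
    finally show "norm (((f y - f x) - (y - x) *\<^sub>R D) /\<^sub>R norm (y - x)) = norm ((1 / (y - x)) *\<^sub>R (f y - f x) - D)"
      by (simp add: d_def)
  qed
  have "(f has_vector_derivative D) (at x within S) \<longleftrightarrow>
     ((\<lambda>y. ((f y - f x) - (y - x) *\<^sub>R D) /\<^sub>R norm (y - x)) \<longlongrightarrow> 0) (at x within S)"
    by (simp add: has_vector_derivative_def has_derivative_at_within bounded_linear_scaleR_left)
  also have "\<dots> \<longleftrightarrow> ((\<lambda>y. norm (((f y - f x) - (y - x) *\<^sub>R D) /\<^sub>R norm (y - x))) \<longlongrightarrow> 0) (at x within S)"
    by (rule tendsto_norm_zero_iff[symmetric])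
  also have "\<dots> \<longleftrightarrow> ((\<lambda>y. norm ((1 / (y - x)) *\<^sub>R (f y - f x) - D)) \<longlongrightarrow> 0) (at x within S)"
    by (rule tendsto_cong[OF eq])
  also have "\<dots> \<longleftrightarrow> ((\<lambda>y. (1 / (y - x)) *\<^sub>R (f y - f x)) \<longlongrightarrow> D) (at x within S)"
    by (simp add: tendsto_norm_zero_iff LIM_zero_iff)
  finally show ?thesis .
qed




context
  fixes U :: "real \<Rightarrow> 'a::{complex_inner, complete_space} \<Rightarrow> 'a"
  assumes U: "c0_semigroup U"
begin

lemma sg_bound': "\<exists>M\<ge>0. \<forall>s\<in>{0..T}. \<forall>x. norm (U s x) \<le> M * norm x"
proof -
  obtain M where M: "\<forall>s\<in>{0..T}. \<forall>x. norm (U s x) \<le> M * norm x" using sg_bound[OF U] by blast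
  have "norm (U s x) \<le> max M 0 * norm x" if "s \<in> {0..T}" for s x
    using M that by (meson max.cobounded1 mult_right_mono norm_ge_zero order_trans)
  then show ?thesis by (intro exI[of _ "max M 0"]) auto
qed

lemma sg_deriv:
  assumes x: "x \<in> gen_dom U" and t: "t \<ge> 0"
  shows "((\<lambda>s. U s x) has_vector_derivative U t (gen U x)) (at t within {0..})"
proof -
  define e where "e y = (1 / \<bar>y - t\<bar>) *\<^sub>R (U \<bar>y - t\<bar> x - x)" for y
  have labs: "filterlim (\<lambda>y. \<bar>y - t\<bar>) (at_right 0) (at t within {0..})"
    unfolding filterlim_at
  proof
    show "\<forall>\<^sub>F y in at t within {0..}. \<bar>y - t\<bar> \<in> {0<..} \<and> \<bar>y - t\<bar> \<noteq> 0"
      unfolding eventually_at_filter by (intro always_eventually) auto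
    have "((\<lambda>y. \<bar>y - t\<bar>) \<longlongrightarrow> \<bar>t - t\<bar>) (at t within {0..})"
      by (intro tendsto_intros)
    then show "((\<lambda>y. \<bar>y - t\<bar>) \<longlongrightarrow> 0) (at t within {0..})" by simp
  qed
  have le: "(e \<longlongrightarrow> gen U x) (at t within {0..})"
    unfolding e_def by (rule filterlim_compose[OF gen_tendsto[OF U x] labs])
  have lm: "((\<lambda>y. min y t) \<longlongrightarrow> min t t) (at t within {0..})"
    by (intro tendsto_intros)
  have ev: "eventually (\<lambda>y. min y t \<in> {0..t}) (at t within {0..})"
    unfolding eventually_at_filter using t by (intro always_eventually) auto
  have lim: "((\<lambda>y. U (min y t) (e y)) \<longlongrightarrow> U t (gen U x)) (at t within {0..})"
    using sg_tendsto[OF U le _ ev t] lm by simp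
  have eq: "eventually (\<lambda>y. U (min y t) (e y) = (1 / (y - t)) *\<^sub>R (U y x - U t x)) (at t within {0..})"
    unfolding eventually_at_filter
  proof (intro always_eventually allI impI)
    fix y :: real assume yt: "y \<noteq> t" and y: "y \<in> {0..}"
    show "U (min y t) (e y) = (1 / (y - t)) *\<^sub>R (U y x - U t x)"
    proof (cases "t < y")
      case True
      have "U y x = U t (U (y - t) x)" using sg_add[OF U t, of "y - t" x] True by simp
      then show ?thesis using True t by (simp add: e_def sg_lin[OF U])
    next
      case False
      then have ty: "y < t" using yt by simp
      have "U t x = U y (U (t - y) x)" using sg_add[OF U, of y "t - y" x] ty y by simp
      moreover have "\<bar>y - t\<bar> = t - y" using ty by simp
      moreover have "1 / (y - t) = - (1 / (t - y))" using ty by (simp add: field_simps)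
      ultimately show ?thesis using ty y
        by (simp add: e_def sg_lin[OF U] scaleR_diff_right)
    qed
  qed
  show ?thesis unfolding vd_iff using tendsto_cong[OF eq] lim by simp
qed

lemma gen_add:
  assumes "x \<in> gen_dom U" "y \<in> gen_dom U"
  shows "x + y \<in> gen_dom U" "gen U (x + y) = gen U x + gen U y"
proof -
  have "((\<lambda>h. (1 / h) *\<^sub>R (U h x - x) + (1 / h) *\<^sub>R (U h y - y)) \<longlongrightarrow> gen U x + gen U y) (at_right 0)"
    by (intro tendsto_add gen_tendsto[OF U] assms)
  moreover have "eventually (\<lambda>h. (1 / h) *\<^sub>R (U h x - x) + (1 / h) *\<^sub>R (U h y - y) = (1 / h) *\<^sub>R (U h (x + y) - (x + y))) (at_right 0)"
    using eventually_at_right_less[of "0::real"]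
    by (rule eventually_mono) (simp add: sg_lin[OF U] scaleR_diff_right scaleR_add_right)
  ultimately have "((\<lambda>h. (1 / h) *\<^sub>R (U h (x + y) - (x + y))) \<longlongrightarrow> gen U x + gen U y) (at_right 0)"
    by (simp add: tendsto_cong)
  then show "x + y \<in> gen_dom U" "gen U (x + y) = gen U x + gen U y" by (rule gen_domI[OF U])+
qed

lemma gen_scaleC:
  assumes "x \<in> gen_dom U"
  shows "scaleC c x \<in> gen_dom U" "gen U (scaleC c x) = scaleC c (gen U x)"
proof -
  have "((\<lambda>h. scaleC c ((1 / h) *\<^sub>R (U h x - x))) \<longlongrightarrow> scaleC c (gen U x)) (at_right 0)"
    by (rule bounded_bilinear.tendsto[OF bounded_bilinear_scaleC tendsto_const gen_tendsto[OF U assms]])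
  moreover have "eventually (\<lambda>h. scaleC c ((1 / h) *\<^sub>R (U h x - x)) = (1 / h) *\<^sub>R (U h (scaleC c x) - scaleC c x)) (at_right 0)"
    using eventually_at_right_less[of "0::real"]
    by (rule eventually_mono) (simp add: sg_C[OF U] scaleC_scaleR_comm scaleC_diff_right)
  ultimately have "((\<lambda>h. (1 / h) *\<^sub>R (U h (scaleC c x) - scaleC c x)) \<longlongrightarrow> scaleC c (gen U x)) (at_right 0)"
    by (simp add: tendsto_cong)
  then show "scaleC c x \<in> gen_dom U" "gen U (scaleC c x) = scaleC c (gen U x)" by (rule gen_domI[OF U])+
qed

lemma gen_diff:
  assumes "x \<in> gen_dom U" "y \<in> gen_dom U"
  shows "x - y \<in> gen_dom U" "gen U (x - y) = gen U x - gen U y"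
proof -
  have m: "scaleC (-1) v = - v" for v :: 'a by (simp add: scaleC_minus_left scaleC_one)
  have "x + scaleC (-1) y \<in> gen_dom U" "gen U (x + scaleC (-1) y) = gen U x + gen U (scaleC (-1) y)"
    using gen_add[OF assms(1) gen_scaleC(1)[OF assms(2)]] by auto
  then show "x - y \<in> gen_dom U" "gen U (x - y) = gen U x - gen U y"
    using gen_scaleC(2)[OF assms(2), of "-1"] by (simp_all add: m)
qed

lemma gen_FTC:
  assumes x: "x \<in> gen_dom U" and h: "h \<ge> 0"
  shows "((\<lambda>s. U s (gen U x)) has_integral (U h x - x)) {0..h}"
proof -
  have "((\<lambda>s. U s (gen U x)) has_integral (U h x - U 0 x)) {0..h}"
  proof (rule fundamental_theorem_of_calculus_interior[OF h])
    show "continuous_on {0..h} (\<lambda>s. U s x)" by (rule continuous_on_subset[OF sg_cont[OF U]]) auto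
    fix s assume s: "s \<in> {0<..<h}"
    have "((\<lambda>s. U s x) has_vector_derivative U s (gen U x)) (at s within {0..h})"
      by (rule has_vector_derivative_within_subset[OF sg_deriv[OF x]]) (use s in auto)
    moreover have "at s within {0..h} = at s" using s by (intro at_within_interior) simp
    ultimately show "((\<lambda>s. U s x) has_vector_derivative U s (gen U x)) (at s)" by simp
  qed
  then show ?thesis by (simp add: sg_0[OF U])
qed

lemma intF_shift:
  assumes h: "h \<ge> 0" and r: "r \<ge> 0"
  shows "U r (integral {0..h} (\<lambda>s. U s x)) = integral {0..h + r} (\<lambda>s. U s x) - integral {0..r} (\<lambda>s. U s x)"
proof -
  have ci: "(\<lambda>s. U s x) integrable_on {0..a}" for a
    by (rule integrable_cont, rule continuous_on_subset[OF sg_cont[OF U]]) auto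
  have i1: "((\<lambda>s. U r (U s x)) has_integral U r (integral {0..h} (\<lambda>s. U s x))) {0..h}"
    using has_integral_linear[OF integrable_integral[OF ci] sg_bl[OF U r]] by (simp add: o_def)
  have eq: "U r (U s x) = ((\<lambda>s. U s x) \<circ> (+) r) s" if "s \<in> {0..h}" for s
    using sg_add[OF U r, of s x] that by (simp add: add.commute)
  have "(((\<lambda>s. U s x) \<circ> (+) r) has_integral U r (integral {0..h} (\<lambda>s. U s x))) {0..h}"
    by (rule has_integral_eq[OF eq i1])
  then have "(((\<lambda>s. U s x) \<circ> (+) r) has_integral U r (integral {0..h} (\<lambda>s. U s x))) (cbox 0 h)"
    by simp
  then have "((\<lambda>s. U s x) has_integral U r (integral {0..h} (\<lambda>s. U s x))) {r..h + r}"
    using has_integral_shift_cbox_iff[of "\<lambda>s. U s x" r "U r (integral {0..h} (\<lambda>s. U s x))" 0 h] by simp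
  from has_integral_combine'[OF _ _ integrable_integral[OF ci] this] r h
  have "((\<lambda>s. U s x) has_integral integral {0..r} (\<lambda>s. U s x) + U r (integral {0..h} (\<lambda>s. U s x))) {0..h + r}"
    by simp
  then show ?thesis by (simp add: integral_unique)
qed

lemma intF_deriv:
  assumes h: "h \<ge> 0"
  shows "((\<lambda>r. (1 / r) *\<^sub>R (integral {0..h + r} (\<lambda>s. U s y) - integral {0..h} (\<lambda>s. U s y))) \<longlongrightarrow> U h y) (at_right 0)"
proof -
  have "((\<lambda>u. integral {0..u} (\<lambda>s. U s y)) has_vector_derivative U h y) (at h within {0..h+1})"
    by (rule integral_has_vd, rule continuous_on_subset[OF sg_cont[OF U]]) (use h in auto)
  then have q: "((\<lambda>u. (1 / (u - h)) *\<^sub>R (integral {0..u} (\<lambda>s. U s y) - integral {0..h} (\<lambda>s. U s y))) \<longlongrightarrow> U h y) (at h within {0..h+1})"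
    by (simp add: vd_iff)
  have f: "filterlim (\<lambda>r. h + r) (at h within {0..h+1}) (at_right 0)"
    unfolding filterlim_at
  proof
    show "\<forall>\<^sub>F r in at_right 0. h + r \<in> {0..h + 1} \<and> h + r \<noteq> h"
      unfolding eventually_at_right_field using h by (intro exI[of _ 1]) auto
    have "((\<lambda>r. h + r) \<longlongrightarrow> h + 0) (at_right 0)" by (intro tendsto_intros)
    then show "((\<lambda>r. h + r) \<longlongrightarrow> h) (at_right (0::real))" by simp
  qed
  show ?thesis using filterlim_compose[OF q f] by simp
qed

lemma intF_dom:
  assumes h: "h \<ge> 0"
  shows "integral {0..h} (\<lambda>s. U s y) \<in> gen_dom U" "gen U (integral {0..h} (\<lambda>s. U s y)) = U h y - y"
proof -
  have "((\<lambda>r. (1 / r) *\<^sub>R (integral {0..h + r} (\<lambda>s. U s y) - integral {0..h} (\<lambda>s. U s y))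
           - (1 / r) *\<^sub>R (integral {0..0 + r} (\<lambda>s. U s y) - integral {0..0} (\<lambda>s. U s y))) \<longlongrightarrow> U h y - U 0 y) (at_right 0)"
    by (intro tendsto_diff intF_deriv h order_refl)
  moreover have "eventually (\<lambda>r. (1 / r) *\<^sub>R (integral {0..h + r} (\<lambda>s. U s y) - integral {0..h} (\<lambda>s. U s y))
           - (1 / r) *\<^sub>R (integral {0..0 + r} (\<lambda>s. U s y) - integral {0..0} (\<lambda>s. U s y)) =
           (1 / r) *\<^sub>R (U r (integral {0..h} (\<lambda>s. U s y)) - integral {0..h} (\<lambda>s. U s y))) (at_right 0)"
    using eventually_at_right_less[of "0::real"]
    by (rule eventually_mono) (simp add: intF_shift h scaleR_diff_right)
  ultimately have "((\<lambda>r. (1 / r) *\<^sub>R (U r (integral {0..h} (\<lambda>s. U s y)) - integral {0..h} (\<lambda>s. U s y))) \<longlongrightarrow> U h y - y) (at_right 0)"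
    by (simp add: tendsto_cong sg_0[OF U])
  then show "integral {0..h} (\<lambda>s. U s y) \<in> gen_dom U" "gen U (integral {0..h} (\<lambda>s. U s y)) = U h y - y"
    by (rule gen_domI[OF U])+
qed

lemma intF_avg: "((\<lambda>r. (1 / r) *\<^sub>R integral {0..r} (\<lambda>s. U s y)) \<longlongrightarrow> y) (at_right 0)"
  using intF_deriv[of 0 y] by (simp add: sg_0[OF U])

lemma gen_dense: "closure (gen_dom U) = UNIV"
proof -
  have "y \<in> closure (gen_dom U)" for y
  proof (rule Lim_in_closed_set[OF closed_closure _ _ intF_avg])
    show "\<forall>\<^sub>F r in at_right 0. (1 / r) *\<^sub>R integral {0..r} (\<lambda>s. U s y) \<in> closure (gen_dom U)"
      using eventually_at_right_less[of "0::real"]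
    proof (rule eventually_mono)
      fix r :: real assume "0 < r"
      then have "integral {0..r} (\<lambda>s. U s y) \<in> gen_dom U" by (intro intF_dom) auto
      then have "scaleC (complex_of_real (1 / r)) (integral {0..r} (\<lambda>s. U s y)) \<in> gen_dom U"
        by (rule gen_scaleC)
      then show "(1 / r) *\<^sub>R integral {0..r} (\<lambda>s. U s y) \<in> closure (gen_dom U)"
        by (simp add: scaleR_scaleC closure_subset[THEN subsetD])
    qed
  qed simp
  then show ?thesis by auto
qed

lemma gen_closed:
  assumes xs: "\<And>n. xs n \<in> gen_dom U" and lx: "xs \<longlonglongrightarrow> x" and ly: "(\<lambda>n. gen U (xs n)) \<longlonglongrightarrow> y"
  shows "x \<in> gen_dom U" "gen U x = y"
proof -
  have key: "U h x - x = integral {0..h} (\<lambda>s. U s y)" if h: "h \<ge> 0" for h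
  proof -
    obtain M where M0: "M \<ge> 0" and M: "\<And>s v. s \<in> {0..h} \<Longrightarrow> norm (U s v) \<le> M * norm v"
      using sg_bound'[of h] by blast
    define I where "I = integral {0..h} (\<lambda>s. U s y)"
    have Ii: "((\<lambda>s. U s y) has_integral I) {0..h}" unfolding I_def
      by (rule integrable_integral, rule integrable_cont, rule continuous_on_subset[OF sg_cont[OF U]]) auto
    have bnd: "norm (U h (xs n) - xs n - I) \<le> M * norm (gen U (xs n) - y) * h" for n
    proof -
      have int: "((\<lambda>s. U s (gen U (xs n)) - U s y) has_integral (U h (xs n) - xs n - I)) {0..h}"
        by (rule has_integral_diff[OF gen_FTC[OF xs h] Ii])
      have pt: "norm (U s (gen U (xs n)) - U s y) \<le> M * norm (gen U (xs n) - y)" if "s \<in> {0..h}" for s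
        using M[OF that, of "gen U (xs n) - y"] that by (simp add: sg_lin[OF U])
      have B0: "0 \<le> M * norm (gen U (xs n) - y)" using M0 by simp
      have "norm (U h (xs n) - xs n - I) \<le> M * norm (gen U (xs n) - y) * Henstock_Kurzweil_Integration.content {0..h}"
        by (rule has_integral_bound_real[OF B0 finite.emptyI int]) (rule pt, simp)
      then show ?thesis using h by simp
    qed
    have "((\<lambda>n. M * norm (gen U (xs n) - y) * h) \<longlongrightarrow> M * norm (y - y) * h) sequentially"
      by (intro tendsto_mult tendsto_const tendsto_norm tendsto_diff ly)
    then have lim0: "((\<lambda>n. M * norm (gen U (xs n) - y) * h) \<longlongrightarrow> 0) sequentially" by simp
    have "((\<lambda>n. U h (xs n) - xs n - I) \<longlongrightarrow> 0) sequentially"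
      by (rule Lim_null_comparison[OF always_eventually[OF allI[OF bnd]] lim0])
    moreover have "((\<lambda>n. U h (xs n) - xs n - I) \<longlongrightarrow> U h x - x - I) sequentially"
      by (intro tendsto_diff bounded_linear.tendsto[OF sg_bl[OF U h]] lx tendsto_const)
    ultimately have "U h x - x - I = 0" using LIMSEQ_unique by blast
    then show ?thesis by (simp add: I_def)
  qed
  have "((\<lambda>r. (1 / r) *\<^sub>R (U r x - x)) \<longlongrightarrow> y) (at_right 0)"
  proof -
    have ev: "eventually (\<lambda>r. (1 / r) *\<^sub>R integral {0..r} (\<lambda>s. U s y) = (1 / r) *\<^sub>R (U r x - x)) (at_right 0)"
      using eventually_at_right_less[of "0::real"] by (rule eventually_mono) (simp add: key)
    show ?thesis using tendsto_cong[OF ev] intF_avg[of y] by blast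
  qed
  then show "x \<in> gen_dom U" "gen U x = y" by (rule gen_domI[OF U])+
qed

lemma sg_prod:
  assumes v: "(v has_vector_derivative v') (at s within S)" and vD: "v s \<in> gen_dom U"
    and g: "(g has_vector_derivative g') (at s within S)"
    and gS: "\<And>y. y \<in> S \<Longrightarrow> g y \<in> {0..T}" and s: "s \<in> S"
  shows "((\<lambda>y. U (g y) (v y)) has_vector_derivative (U (g s) v' + g' *\<^sub>R U (g s) (gen U (v s)))) (at s within S)"
proof -
  have gs0: "g s \<ge> 0" using gS[OF s] by simp
  have q1: "((\<lambda>y. (1 / (y - s)) *\<^sub>R (v y - v s)) \<longlongrightarrow> v') (at s within S)" using v by (simp add: vd_iff)
  have gt: "(g \<longlongrightarrow> g s) (at s within S)"
    using has_vector_derivative_continuous[OF g] by (simp add: continuous_within)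
  have ev: "eventually (\<lambda>y. g y \<in> {0..T}) (at s within S)"
    unfolding eventually_at_filter using gS by (intro always_eventually) auto
  have t1: "((\<lambda>y. U (g y) ((1 / (y - s)) *\<^sub>R (v y - v s))) \<longlongrightarrow> U (g s) v') (at s within S)"
    by (rule sg_tendsto[OF U q1 gt ev gs0])
  have "((\<lambda>r. U r (v s)) has_vector_derivative U (g s) (gen U (v s))) (at (g s) within g ` S)"
    by (rule has_vector_derivative_within_subset[OF sg_deriv[OF vD gs0]]) (use gS in auto)
  from vector_diff_chain_within[OF g this]
  have "((\<lambda>y. U (g y) (v s)) has_vector_derivative g' *\<^sub>R U (g s) (gen U (v s))) (at s within S)"
    by (simp add: o_def)
  then have t2: "((\<lambda>y. (1 / (y - s)) *\<^sub>R (U (g y) (v s) - U (g s) (v s))) \<longlongrightarrow> g' *\<^sub>R U (g s) (gen U (v s))) (at s within S)"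
    by (simp add: vd_iff)
  have eq: "eventually (\<lambda>y. U (g y) ((1 / (y - s)) *\<^sub>R (v y - v s)) + (1 / (y - s)) *\<^sub>R (U (g y) (v s) - U (g s) (v s))
      = (1 / (y - s)) *\<^sub>R (U (g y) (v y) - U (g s) (v s))) (at s within S)"
    unfolding eventually_at_filter
  proof (intro always_eventually allI impI)
    fix y assume "y \<in> S"
    then have "g y \<ge> 0" using gS by auto
    then show "U (g y) ((1 / (y - s)) *\<^sub>R (v y - v s)) + (1 / (y - s)) *\<^sub>R (U (g y) (v s) - U (g s) (v s))
      = (1 / (y - s)) *\<^sub>R (U (g y) (v y) - U (g s) (v s))"
      by (simp add: sg_lin[OF U] scaleR_diff_right)
  qed
  show ?thesis unfolding vd_iff using tendsto_cong[OF eq] tendsto_add[OF t1 t2] by simp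
qed

end




lemma projP_eq: "projP z x = scaleC (cinner x z / cinner z z) z" by (simp add: projP_def)

lemma projQ_add: "projQ z (x + y) = projQ z x + projQ z y"
  by (simp add: projQ_def projP_def cinner_add_left add_divide_distrib scaleC_add_left algebra_simps)
lemma projQ_scaleC: "projQ z (scaleC a x) = scaleC a (projQ z x)"
  by (simp add: projQ_def projP_def cinner_scaleC_left scaleC_diff_right scaleC_scaleC)
lemma projQ_diff: "projQ z (x - y) = projQ z x - projQ z y"
  by (simp add: projQ_def projP_def cinner_diff_left diff_divide_distrib scaleC_diff_left algebra_simps)
lemma projQ_z: "z \<noteq> 0 \<Longrightarrow> projQ z z = 0"
  by (simp add: projQ_def projP_def cinner_self_eq_zero scaleC_one)
lemma cinner_projQ: "z \<noteq> 0 \<Longrightarrow> cinner (projQ z x) z = 0"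
  by (simp add: projQ_def projP_def cinner_diff_left cinner_scaleC_left cinner_self_eq_zero)
lemma projQ_scaleC_z: "z \<noteq> 0 \<Longrightarrow> projQ z (x - scaleC a z) = projQ z x"
  by (simp add: projQ_diff projQ_scaleC projQ_z)
lemma projQ_tendsto:
  assumes "z \<noteq> 0" "(f \<longlongrightarrow> x) F" shows "((\<lambda>i. projQ z (f i)) \<longlongrightarrow> projQ z x) F"
  unfolding projQ_def projP_def
  by (intro tendsto_diff assms bounded_bilinear.tendsto[OF bounded_bilinear_scaleC] tendsto_const
      tendsto_divide bounded_bilinear.tendsto[OF bounded_bilinear_cinner]) (use assms(1) in \<open>simp add: cinner_self_eq_zero\<close>)
lemma cinner_right_projQ: "z \<noteq> 0 \<Longrightarrow> cinner v z = 0 \<Longrightarrow> cinner v (projQ z w) = cinner v w"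
  by (simp add: projQ_def projP_def cinner_diff_right cinner_scaleC_right)

context
  fixes U G :: "real \<Rightarrow> 'a::{complex_inner, complete_space} \<Rightarrow> 'a"
    and z :: 'a
  assumes U_sg: "c0_semigroup U"
    and z_dom: "z \<in> gen_dom U"
    and z_adj: "z \<in> adj_dom (gen_dom U) (gen U)"
    and z_nz: "z \<noteq> 0"
    and G_sg: "c0_semigroup G"
    and G_dom: "gen_dom G =
        {x. projQ z x \<in> clos_dom (gen_dom U) (\<lambda>x. projQ z (gen U x))}"
    and G_gen: "\<forall>x\<in>gen_dom G.
        gen G x = clos (gen_dom U) (\<lambda>x. projQ z (gen U x)) (projQ z x)"
begin

lemma c_nz: "cinner z z \<noteq> 0" using z_nz by (simp add: cinner_self_eq_zero)

lemma adj_prop: "\<forall>x\<in>gen_dom U. cinner (gen U x) z = cinner x (adj (gen_dom U) (gen U) z)"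
proof -
  obtain w where w: "\<forall>x\<in>gen_dom U. cinner (gen U x) z = cinner x w"
    using z_adj by (auto simp: adj_dom_def)
  have uniq: "w' = w" if w': "\<forall>x\<in>gen_dom U. cinner (gen U x) z = cinner x w'" for w'
  proof -
    have "gen_dom U \<subseteq> {x. cinner x (w' - w) = 0}"
      using w w' by (auto simp: cinner_diff_right)
    moreover have "closed {x. cinner x (w' - w) = 0}"
      by (intro closed_Collect_eq continuous_on_const bounded_linear.continuous_on[OF bounded_bilinear.bounded_linear_left[OF bounded_bilinear_cinner]] continuous_on_id)
    ultimately have "closure (gen_dom U) \<subseteq> {x. cinner x (w' - w) = 0}" by (rule closure_minimal)
    then have "cinner (w' - w) (w' - w) = 0" using gen_dense[OF U_sg] by auto
    then show ?thesis by (simp add: cinner_self_eq_zero)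
  qed
  have "adj (gen_dom U) (gen U) z = w"
    unfolding adj_def using w uniq by (intro the_equality) auto
  then show ?thesis using w by simp
qed

lemma graph_closure:
  "(x, y) \<in> closure (graph (gen_dom U) (\<lambda>x. projQ z (gen U x))) \<longleftrightarrow> x \<in> gen_dom U \<and> y = projQ z (gen U x)"
proof
  assume "x \<in> gen_dom U \<and> y = projQ z (gen U x)"
  then have "(x, y) \<in> graph (gen_dom U) (\<lambda>x. projQ z (gen U x))" by (auto simp: graph_def)
  then show "(x, y) \<in> closure (graph (gen_dom U) (\<lambda>x. projQ z (gen U x)))" using closure_subset by blast
next
  assume "(x, y) \<in> closure (graph (gen_dom U) (\<lambda>x. projQ z (gen U x)))"
  then obtain p where p: "\<And>n. p n \<in> graph (gen_dom U) (\<lambda>x. projQ z (gen U x))" and pl: "p \<longlonglongrightarrow> (x, y)"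
    unfolding closure_sequential by blast
  define xs where "xs n = fst (p n)" for n
  have xsD: "xs n \<in> gen_dom U" and pn: "snd (p n) = projQ z (gen U (xs n))" for n
    using p[of n] by (auto simp: graph_def xs_def)
  have lx: "xs \<longlonglongrightarrow> x" unfolding xs_def using tendsto_fst[OF pl] by simp
  have lq: "(\<lambda>n. projQ z (gen U (xs n))) \<longlonglongrightarrow> y" using tendsto_snd[OF pl] pn by simp
  define w where "w = adj (gen_dom U) (gen U) z"
  have split: "gen U (xs n) = projQ z (gen U (xs n)) + scaleC (cinner (xs n) w / cinner z z) z" for n
    using adj_prop xsD[of n] by (simp add: projQ_def projP_def w_def)
  have "(\<lambda>n. projQ z (gen U (xs n)) + scaleC (cinner (xs n) w / cinner z z) z) \<longlonglongrightarrow> y + scaleC (cinner x w / cinner z z) z"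
    by (intro tendsto_add lq bounded_bilinear.tendsto[OF bounded_bilinear_scaleC] tendsto_const
      tendsto_divide bounded_bilinear.tendsto[OF bounded_bilinear_cinner] lx) (simp add: c_nz)
  then have lg: "(\<lambda>n. gen U (xs n)) \<longlonglongrightarrow> y + scaleC (cinner x w / cinner z z) z"
    by (simp add: split[symmetric])
  have xD: "x \<in> gen_dom U" and gx: "gen U x = y + scaleC (cinner x w / cinner z z) z"
    using gen_closed[OF U_sg xsD lx lg] by auto
  have "(\<lambda>n. projQ z (gen U (xs n))) \<longlonglongrightarrow> projQ z (gen U x)"
    by (intro projQ_tendsto[OF z_nz]) (use lg gx in simp)
  then have "y = projQ z (gen U x)" using lq LIMSEQ_unique by blast
  then show "x \<in> gen_dom U \<and> y = projQ z (gen U x)" using xD by simp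
qed

lemma clos_dom_eq: "clos_dom (gen_dom U) (\<lambda>x. projQ z (gen U x)) = gen_dom U"
  unfolding clos_dom_def using graph_closure by auto

lemma clos_eq: "x \<in> gen_dom U \<Longrightarrow> clos (gen_dom U) (\<lambda>x. projQ z (gen U x)) x = projQ z (gen U x)"
  unfolding clos_def using graph_closure by (intro the_equality) auto

lemma Q_dom: "projQ z x \<in> gen_dom U \<longleftrightarrow> x \<in> gen_dom U"
proof -
  have e: "projQ z x = x - scaleC (cinner x z / cinner z z) z" by (simp add: projQ_def projP_def)
  have zs: "scaleC a z \<in> gen_dom U" for a by (rule gen_scaleC(1)[OF U_sg z_dom])
  show ?thesis
  proof
    assume "projQ z x \<in> gen_dom U"
    then have "projQ z x + scaleC (cinner x z / cinner z z) z \<in> gen_dom U" using gen_add(1)[OF U_sg _ zs] by blast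
    then show "x \<in> gen_dom U" by (simp add: e)
  next
    assume "x \<in> gen_dom U"
    then show "projQ z x \<in> gen_dom U" unfolding e using gen_diff(1)[OF U_sg _ zs] by blast
  qed
qed

lemma G_dom_eq: "gen_dom G = gen_dom U"
  using G_dom by (auto simp: clos_dom_eq Q_dom)

definition "Bop v = scaleC (cinner v (adj (gen_dom U) (gen U) z) / cinner z z) z
   + scaleC (cinner v z / cinner z z) (projQ z (gen U z))"

lemma G_gen_eq:
  assumes x: "x \<in> gen_dom U"
  shows "gen G x = gen U x - Bop x"
proof -
  define a where "a = cinner x z / cinner z z"
  have Qx: "projQ z x = x - scaleC a z" by (simp add: projQ_def projP_def a_def)
  have QxD: "projQ z x \<in> gen_dom U" using x Q_dom by simp
  have "gen G x = projQ z (gen U (projQ z x))"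
    using G_gen x G_dom_eq clos_eq[OF QxD] by simp
  also have "gen U (projQ z x) = gen U x - scaleC a (gen U z)"
    unfolding Qx using gen_diff(2)[OF U_sg x gen_scaleC(1)[OF U_sg z_dom]] gen_scaleC(2)[OF U_sg z_dom] by simp
  also have "projQ z (gen U x - scaleC a (gen U z)) = projQ z (gen U x) - scaleC a (projQ z (gen U z))"
    by (simp add: projQ_diff projQ_scaleC)
  also have "projQ z (gen U x) = gen U x - scaleC (cinner x (adj (gen_dom U) (gen U) z) / cinner z z) z"
    using adj_prop x by (simp add: projQ_def projP_def)
  finally show ?thesis by (simp add: Bop_def a_def algebra_simps)
qed


lemma G_gen_Q: "x \<in> gen_dom U \<Longrightarrow> gen G x = projQ z (gen U (projQ z x))"
  using G_gen G_dom_eq clos_eq Q_dom by simp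

lemma duhamel:
  assumes y: "y \<in> gen_dom U" and t: "t \<ge> 0"
  shows "((\<lambda>s. U (t - s) (Bop (G s y))) has_integral (U t y - G t y)) {0..t}"
proof -
  have phi_d: "((\<lambda>s. U (t - s) (G s y)) has_vector_derivative (- U (t - s) (Bop (G s y)))) (at s within {0..t})"
    if s: "s \<in> {0..t}" for s
  proof -
    have s0: "s \<ge> 0" using s by simp
    have GsD: "G s y \<in> gen_dom U" using gen_inv(1)[OF G_sg _ s0] y G_dom_eq by simp
    have vd: "((\<lambda>s. G s y) has_vector_derivative G s (gen G y)) (at s within {0..t})"
      by (rule has_vector_derivative_within_subset[OF sg_deriv[OF G_sg]]) (use y G_dom_eq s in auto)
    have gd: "((\<lambda>s. t - s) has_vector_derivative -1) (at s within {0..t})"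
      using has_vector_derivative_diff[OF has_vector_derivative_const has_vector_derivative_id] by simp
    have gS: "\<And>r. r \<in> {0..t} \<Longrightarrow> t - r \<in> {0..t}" by auto
    have d: "((\<lambda>r. U (t - r) (G r y)) has_vector_derivative (U (t - s) (G s (gen G y)) + (-1) *\<^sub>R U (t - s) (gen U (G s y)))) (at s within {0..t})"
      by (rule sg_prod[OF U_sg vd GsD gd gS s])
    have "G s (gen G y) = gen G (G s y)" using gen_inv(2)[OF G_sg _ s0] y G_dom_eq by simp
    also have "\<dots> = gen U (G s y) - Bop (G s y)" by (rule G_gen_eq[OF GsD])
    finally have "U (t - s) (G s (gen G y)) + (-1) *\<^sub>R U (t - s) (gen U (G s y)) = - U (t - s) (Bop (G s y))"
      using s by (simp add: sg_lin[OF U_sg])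
    then show ?thesis using d by simp
  qed
  have "((\<lambda>s. - U (t - s) (Bop (G s y))) has_integral (U (t - t) (G t y) - U (t - 0) (G 0 y))) {0..t}"
  proof (rule fundamental_theorem_of_calculus_interior[OF t])
    show "continuous_on {0..t} (\<lambda>s. U (t - s) (G s y))" by (rule continuous_on_vector_derivative[OF phi_d])
    fix s assume s: "s \<in> {0<..<t}"
    have "at s within {0..t} = at s" using s by (intro at_within_interior) simp
    then show "((\<lambda>s. U (t - s) (G s y)) has_vector_derivative - U (t - s) (Bop (G s y))) (at s)"
      using phi_d[of s] s by simp
  qed
  from has_integral_neg[OF this] show ?thesis by (simp add: sg_0[OF U_sg] sg_0[OF G_sg])
qed

lemma G_inv_z:
  assumes s: "s \<ge> 0"
  shows "cinner (G s x) z = cinner x z"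
proof -
  have blz: "bounded_linear (\<lambda>v. cinner v z)"
    by (rule bounded_bilinear.bounded_linear_left[OF bounded_bilinear_cinner])
  have onD: "cinner (G s x) z = cinner x z" if x: "x \<in> gen_dom U" for x
  proof -
    have d: "((\<lambda>r. cinner (G r x) z) has_vector_derivative 0) (at r within {0..s})" if r: "r \<in> {0..s}" for r
    proof -
      have r0: "r \<ge> 0" using r by simp
      have vd: "((\<lambda>r. G r x) has_vector_derivative G r (gen G x)) (at r within {0..s})"
        by (rule has_vector_derivative_within_subset[OF sg_deriv[OF G_sg]]) (use x G_dom_eq r in auto)
      have GrD: "G r x \<in> gen_dom U" using gen_inv(1)[OF G_sg _ r0] x G_dom_eq by simp
      have "G r (gen G x) = gen G (G r x)" using gen_inv(2)[OF G_sg _ r0] x G_dom_eq by simp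
      then have "cinner (G r (gen G x)) z = 0" using G_gen_Q[OF GrD] cinner_projQ[OF z_nz] by simp
      with bounded_linear.has_vector_derivative[OF blz vd] show ?thesis by simp
    qed
    have "((\<lambda>r. 0) has_integral (cinner (G s x) z - cinner (G 0 x) z)) {0..s}"
    proof (rule fundamental_theorem_of_calculus_interior[OF s])
      show "continuous_on {0..s} (\<lambda>r. cinner (G r x) z)" by (rule continuous_on_vector_derivative[OF d])
      fix r assume r: "r \<in> {0<..<s}"
      have "at r within {0..s} = at r" using r by (intro at_within_interior) simp
      then show "((\<lambda>r. cinner (G r x) z) has_vector_derivative 0) (at r)" using d[of r] r by simp
    qed
    then show ?thesis by (simp add: sg_0[OF G_sg])
  qed
  have "gen_dom U \<subseteq> {x. cinner (G s x) z = cinner x z}" using onD by auto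
  moreover have "closed {x. cinner (G s x) z = cinner x z}"
    by (intro closed_Collect_eq linear_continuous_on bounded_linear_compose[OF blz sg_bl[OF G_sg s]] blz)
  ultimately have "closure (gen_dom U) \<subseteq> {x. cinner (G s x) z = cinner x z}" by (rule closure_minimal)
  then show ?thesis using gen_dense[OF U_sg] by auto
qed

lemma Bop_bl: "bounded_linear Bop"
proof (rule bounded_linear_intro)
  fix x y :: 'a and r :: real
  show "Bop (x + y) = Bop x + Bop y"
    by (simp add: Bop_def cinner_add_left add_divide_distrib scaleC_add_left algebra_simps)
  show "Bop (r *\<^sub>R x) = r *\<^sub>R Bop x"
    by (simp add: Bop_def cinner_scaleC_left scaleR_scaleC scaleC_scaleC scaleC_add_right)
  define w where "w = adj (gen_dom U) (gen U) z"
  define q where "q = projQ z (gen U z)"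
  have "norm (Bop x) \<le> norm (scaleC (cinner x w / cinner z z) z) + norm (scaleC (cinner x z / cinner z z) q)"
    unfolding Bop_def w_def q_def by (rule norm_triangle_ineq)
  also have "\<dots> = cmod (cinner x w) / cmod (cinner z z) * norm z + cmod (cinner x z) / cmod (cinner z z) * norm q"
    by (simp add: norm_scaleC norm_divide)
  also have "\<dots> \<le> (norm x * norm w) / cmod (cinner z z) * norm z + (norm x * norm z) / cmod (cinner z z) * norm q"
    by (intro add_mono mult_right_mono divide_right_mono cauchy_schwarz_c) auto
  also have "\<dots> = norm x * ((norm w * norm z + norm z * norm q) / cmod (cinner z z))"
    by (simp add: add_divide_distrib algebra_simps)
  finally show "norm (Bop x) \<le> norm x * ((norm w * norm z + norm z * norm q) / cmod (cinner z z))" .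
qed

lemma cont_UG:
  assumes t: "t \<ge> 0"
  shows "continuous_on {0..t} (\<lambda>s. U (t - s) (Bop (G s x)))"
  unfolding continuous_on_def
proof
  fix s assume s: "s \<in> {0..t}"
  have "((\<lambda>s. G s x) \<longlongrightarrow> G s x) (at s within {0..t})"
    using continuous_on_subset[OF sg_cont[OF G_sg], of "{0..t}"] s by (auto simp: continuous_on_def)
  then have v: "((\<lambda>s. Bop (G s x)) \<longlongrightarrow> Bop (G s x)) (at s within {0..t})"
    by (rule bounded_linear.tendsto[OF Bop_bl])
  have r: "((\<lambda>r. t - r) \<longlongrightarrow> t - s) (at s within {0..t})" by (intro tendsto_intros)
  have ev: "eventually (\<lambda>r. t - r \<in> {0..t}) (at s within {0..t})"
    unfolding eventually_at_filter by (intro always_eventually) auto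
  show "((\<lambda>s. U (t - s) (Bop (G s x))) \<longlongrightarrow> U (t - s) (Bop (G s x))) (at s within {0..t})"
    by (rule sg_tendsto[OF U_sg v r ev]) (use s in simp)
qed

lemma duhamel_all:
  assumes t: "t \<ge> 0"
  shows "((\<lambda>s. U (t - s) (Bop (G s x))) has_integral (U t x - G t x)) {0..t}"
proof -
  obtain ys where ysD: "\<And>n. ys n \<in> gen_dom U" and ly: "ys \<longlonglongrightarrow> x"
    using gen_dense[OF U_sg] closure_sequential by (metis UNIV_I)
  obtain MU where MU0: "MU \<ge> 0" and MU: "\<And>s v. s \<in> {0..t} \<Longrightarrow> norm (U s v) \<le> MU * norm v"
    using sg_bound'[OF U_sg, of t] by blast
  obtain MG where MG0: "MG \<ge> 0" and MG: "\<And>s v. s \<in> {0..t} \<Longrightarrow> norm (G s v) \<le> MG * norm v"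
    using sg_bound'[OF G_sg, of t] by blast
  obtain KB where KB: "\<And>v. norm (Bop v) \<le> norm v * KB" and KB0: "KB > 0"
    using bounded_linear.pos_bounded[OF Bop_bl] by blast
  define J where "J = integral {0..t} (\<lambda>s. U (t - s) (Bop (G s x)))"
  have Ji: "((\<lambda>s. U (t - s) (Bop (G s x))) has_integral J) {0..t}"
    unfolding J_def by (rule integrable_integral, rule integrable_cont, rule cont_UG[OF t])
  have bnd: "norm (J - (U t (ys n) - G t (ys n))) \<le> MU * KB * MG * norm (x - ys n) * t" for n
  proof -
    have int: "((\<lambda>s. U (t - s) (Bop (G s x)) - U (t - s) (Bop (G s (ys n)))) has_integral (J - (U t (ys n) - G t (ys n)))) {0..t}"
      by (rule has_integral_diff[OF Ji duhamel[OF ysD t]])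
    have pt: "norm (U (t - s) (Bop (G s x)) - U (t - s) (Bop (G s (ys n)))) \<le> MU * KB * MG * norm (x - ys n)"
      if s: "s \<in> {0..t}" for s
    proof -
      have "U (t - s) (Bop (G s x)) - U (t - s) (Bop (G s (ys n))) = U (t - s) (Bop (G s (x - ys n)))"
        using s by (simp add: sg_lin[OF U_sg] sg_lin[OF G_sg] linear_simps[OF Bop_bl])
      also have "norm \<dots> \<le> MU * norm (Bop (G s (x - ys n)))" using MU[of "t - s"] s by simp
      also have "\<dots> \<le> MU * (norm (G s (x - ys n)) * KB)" using KB MU0 by (intro mult_left_mono) auto
      also have "\<dots> \<le> MU * ((MG * norm (x - ys n)) * KB)"
        using MG[OF s] MU0 KB0 by (intro mult_left_mono mult_right_mono) auto
      finally show ?thesis by (simp add: algebra_simps)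
    qed
    have B0: "0 \<le> MU * KB * MG * norm (x - ys n)" using MU0 KB0 MG0 by simp
    have "norm (J - (U t (ys n) - G t (ys n))) \<le> MU * KB * MG * norm (x - ys n) * Henstock_Kurzweil_Integration.content {0..t}"
      by (rule has_integral_bound_real[OF B0 finite.emptyI int]) (rule pt, simp)
    then show ?thesis using t by simp
  qed
  have "((\<lambda>n. MU * KB * MG * norm (x - ys n) * t) \<longlongrightarrow> MU * KB * MG * norm (x - x) * t) sequentially"
    by (intro tendsto_mult tendsto_const tendsto_norm tendsto_diff ly)
  then have lim0: "((\<lambda>n. MU * KB * MG * norm (x - ys n) * t) \<longlongrightarrow> 0) sequentially" by simp
  have "((\<lambda>n. J - (U t (ys n) - G t (ys n))) \<longlongrightarrow> 0) sequentially"
    by (rule Lim_null_comparison[OF always_eventually[OF allI[OF bnd]] lim0])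
  moreover have "((\<lambda>n. J - (U t (ys n) - G t (ys n))) \<longlongrightarrow> J - (U t x - G t x)) sequentially"
    by (intro tendsto_diff tendsto_const bounded_linear.tendsto[OF sg_bl[OF U_sg t]] bounded_linear.tendsto[OF sg_bl[OF G_sg t]] ly)
  ultimately have "J - (U t x - G t x) = 0" using LIMSEQ_unique by blast
  then show ?thesis using Ji by simp
qed

lemma main_identity:
  assumes t: "t \<ge> 0"
  shows "U t (gen U z) = U t (projP z (gen U z)) + G t (projQ z (gen U z))
         + integral {0..t} (\<lambda>s.
             scaleC (cinner (G (t - s) (projQ z (gen U z)))
                            (projQ z (adj (gen_dom U) (gen U) z)) / cinner z z)
                    (U s z))"
proof -
  define q where "q = projQ z (gen U z)"
  define w where "w = adj (gen_dom U) (gen U) z"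
  define k where "k s = scaleC (cinner (G s q) (projQ z w) / cinner z z) (U (t - s) z)" for s
  have eq: "U (t - s) (Bop (G s q)) = k s" if s: "s \<in> {0..t}" for s
  proof -
    have "cinner (G s q) z = 0" using G_inv_z[of s q] s cinner_projQ[OF z_nz] by (simp add: q_def)
    moreover then have "cinner (G s q) (projQ z w) = cinner (G s q) w" by (rule cinner_right_projQ[OF z_nz])
    ultimately show ?thesis using s
      by (simp add: Bop_def k_def sg_lin[OF U_sg] sg_C[OF U_sg] q_def w_def)
  qed
  have ki: "(k has_integral (U t q - G t q)) {0..t}"
    by (rule has_integral_eq[OF eq duhamel_all[OF t]])
  have "((\<lambda>s. k (- s)) has_integral (U t q - G t q)) {-t..-0}"
    using has_integral_reflect_real[of k "U t q - G t q" 0 t] ki by blast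
  then have "(((\<lambda>s. k (- s)) \<circ> (+) (-t)) has_integral (U t q - G t q)) (cbox 0 t)"
    using has_integral_shift_cbox_iff[of "\<lambda>s. k (- s)" "-t" "U t q - G t q" 0 t] by simp
  moreover have "((\<lambda>s. k (- s)) \<circ> (+) (-t)) = (\<lambda>s. scaleC (cinner (G (t - s) q) (projQ z w) / cinner z z) (U s z))"
    by (simp add: k_def o_def)
  ultimately have "integral {0..t} (\<lambda>s. scaleC (cinner (G (t - s) q) (projQ z w) / cinner z z) (U s z)) = U t q - G t q"
    by (simp add: integral_unique)
  moreover have "U t (gen U z) = U t (projP z (gen U z)) + U t q"
    using t by (simp add: q_def projQ_def sg_lin[OF U_sg])
  ultimately show ?thesis by (simp add: q_def w_def)
qed

lemma final:
  "\<forall>t\<ge>0. U t z \<in> gen_dom U \<and>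
     ((\<lambda>s. U s z) has_vector_derivative
        (U t (projP z (gen U z))
         + G t (projQ z (gen U z))
         + integral {0..t} (\<lambda>s.
             scaleC (cinner (G (t - s) (projQ z (gen U z)))
                            (projQ z (adj (gen_dom U) (gen U) z)) / cinner z z)
                    (U s z))))
      (at t within {0..})"
proof (intro allI impI conjI)
  fix t :: real assume t: "t \<ge> 0"
  show "U t z \<in> gen_dom U" by (rule gen_inv(1)[OF U_sg z_dom t])
  show "((\<lambda>s. U s z) has_vector_derivative
        (U t (projP z (gen U z))
         + G t (projQ z (gen U z))
         + integral {0..t} (\<lambda>s.
             scaleC (cinner (G (t - s) (projQ z (gen U z)))
                            (projQ z (adj (gen_dom U) (gen U) z)) / cinner z z)
                    (U s z))))
      (at t within {0..})"
    using sg_deriv[OF U_sg z_dom t] main_identity[OF t] by simp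
qed

end

theorem theorem1:
  fixes U G :: "real \<Rightarrow> 'a::{complex_inner, complete_space} \<Rightarrow> 'a"
    and z :: 'a
  assumes U_sg: "c0_semigroup U"
    and z_dom: "z \<in> gen_dom U"
    and z_adj: "z \<in> adj_dom (gen_dom U) (gen U)"
    and z_nz: "z \<noteq> 0"
    and G_sg: "c0_semigroup G"
    and G_dom: "gen_dom G =
        {x. projQ z x \<in> clos_dom (gen_dom U) (\<lambda>x. projQ z (gen U x))}"
    and G_gen: "\<forall>x\<in>gen_dom G.
        gen G x = clos (gen_dom U) (\<lambda>x. projQ z (gen U x)) (projQ z x)"
  shows "\<forall>t\<ge>0. U t z \<in> gen_dom U \<and>
     ((\<lambda>s. U s z) has_vector_derivative
        (U t (projP z (gen U z))
         + G t (projQ z (gen U z))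
         + integral {0..t} (\<lambda>s.
             scaleC (cinner (G (t - s) (projQ z (gen U z)))
                            (projQ z (adj (gen_dom U) (gen U) z)) / cinner z z)
                    (U s z))))
      (at t within {0..})"
    using final[OF U_sg z_dom z_adj z_nz G_sg G_dom G_gen] .

end
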